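(* A diamond-free graph is clique simplicial if and only if it is edge simplicial.
   Context: A vertex $v$ is simplicial if $N[v]$ is a clique; a clique is simplicial if it equals $N[v]$ for a simplicial vertex $v$. A graph is clique simplicial if every inclusion-maximal clique is simplicial, and edge simplicial if every edge lies in a simplicial clique. The diamond is $K_4$ minus one edge; diamond-free means no induced diamond. *)

theory Defs
  imports Main
begin

definition graph :: "'a set \<Rightarrow> ('a \<Rightarrow> 'a \<Rightarrow> bool) \<Rightarrow> bool" where
  "graph V E \<longleftrightarrow> finite V \<and> V \<noteq> {} \<and> (\<forall>u v. E u v \<longrightarrow> E v u) \<and> (\<forall>v. \<not> E v v)
      \<and> (\<forall>u v. E u v \<longrightarrow> u \<in> V \<and> v \<in> V)"

definition clique :: "'a set \<Rightarrow> ('a \<Rightarrow> 'a \<Rightarrow> bool) \<Rightarrow> 'a set \<Rightarrow> bool" where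
  "clique V E K \<longleftrightarrow> K \<subseteq> V \<and> (\<forall>u\<in>K. \<forall>v\<in>K. u \<noteq> v \<longrightarrow> E u v)"

definition maximal_clique :: "'a set \<Rightarrow> ('a \<Rightarrow> 'a \<Rightarrow> bool) \<Rightarrow> 'a set \<Rightarrow> bool" where
  "maximal_clique V E K \<longleftrightarrow> clique V E K \<and> (\<forall>K'. clique V E K' \<and> K \<subseteq> K' \<longrightarrow> K' = K)"

definition closed_nbhd :: "'a set \<Rightarrow> ('a \<Rightarrow> 'a \<Rightarrow> bool) \<Rightarrow> 'a \<Rightarrow> 'a set" where
  "closed_nbhd V E v = insert v {u \<in> V. E v u}"

definition simplicial_vertex :: "'a set \<Rightarrow> ('a \<Rightarrow> 'a \<Rightarrow> bool) \<Rightarrow> 'a \<Rightarrow> bool" where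
  "simplicial_vertex V E v \<longleftrightarrow> v \<in> V \<and> clique V E (closed_nbhd V E v)"

definition simplicial_clique :: "'a set \<Rightarrow> ('a \<Rightarrow> 'a \<Rightarrow> bool) \<Rightarrow> 'a set \<Rightarrow> bool" where
  "simplicial_clique V E K \<longleftrightarrow> (\<exists>v. simplicial_vertex V E v \<and> K = closed_nbhd V E v)"

definition clique_simplicial :: "'a set \<Rightarrow> ('a \<Rightarrow> 'a \<Rightarrow> bool) \<Rightarrow> bool" where
  "clique_simplicial V E \<longleftrightarrow> (\<forall>K. maximal_clique V E K \<longrightarrow> simplicial_clique V E K)"

definition edge_simplicial :: "'a set \<Rightarrow> ('a \<Rightarrow> 'a \<Rightarrow> bool) \<Rightarrow> bool" where
  "edge_simplicial V E \<longleftrightarrow>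
     (\<forall>u v. E u v \<longrightarrow> (\<exists>K. simplicial_clique V E K \<and> u \<in> K \<and> v \<in> K))"

definition diamond_free :: "'a set \<Rightarrow> ('a \<Rightarrow> 'a \<Rightarrow> bool) \<Rightarrow> bool" where
  "diamond_free V E \<longleftrightarrow> \<not> (\<exists>a\<in>V. \<exists>b\<in>V. \<exists>c\<in>V. \<exists>d\<in>V.
      distinct [a, b, c, d] \<and> E a b \<and> E a c \<and> E a d \<and> E b c \<and> E b d \<and> \<not> E c d)"

end

theory Submission
  imports Defs
begin

lemma ex_max_clique:
  assumes fin: "finite V"
  shows "clique V E C \<Longrightarrow> \<exists>K. maximal_clique V E K \<and> C \<subseteq> K"
proof (induction "card V - card C" arbitrary: C rule: less_induct)
  case less
  show ?case
  proof (cases "maximal_clique V E C")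
    case True thus ?thesis by blast
  next
    case False
    then obtain K' where K': "clique V E K'" "C \<subseteq> K'" "K' \<noteq> C"
      using less.prems unfolding maximal_clique_def by blast
    have "K' \<subseteq> V" using K'(1) unfolding clique_def by blast
    hence "card K' \<le> card V" "finite K'" using fin card_mono finite_subset by blast+
    moreover have "C \<subset> K'" using K' by blast
    ultimately have "card C < card K'" using psubset_card_mono by blast
    hence "card V - card K' < card V - card C" using \<open>card K' \<le> card V\<close> by linarith
    from less.hyps[OF this K'(1)] obtain K where "maximal_clique V E K" "K' \<subseteq> K" by blast
    thus ?thesis using K'(2) by blast
  qed
qed

theorem mainTheorem13:
  assumes "graph V E" and "diamond_free V E"
  shows "clique_simplicial V E \<longleftrightarrow> edge_simplicial V E"
proof
  assume cs: "clique_simplicial V E"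
  show "edge_simplicial V E"
    unfolding edge_simplicial_def
  proof (intro allI impI)
    fix u v assume "E u v"
    moreover have "u \<in> V" "v \<in> V" "E v u" using assms(1) \<open>E u v\<close> unfolding graph_def by blast+
    ultimately have "clique V E {u, v}" unfolding clique_def by blast
    moreover have "finite V" using assms(1) unfolding graph_def by simp
    ultimately obtain K where "maximal_clique V E K" "{u,v} \<subseteq> K"
      using ex_max_clique by blast
    thus "\<exists>K. simplicial_clique V E K \<and> u \<in> K \<and> v \<in> K"
      using cs unfolding clique_simplicial_def by blast
  qed
next
  assume es: "edge_simplicial V E"
  show "clique_simplicial V E"
    unfolding clique_simplicial_def
  proof (intro allI impI)
    fix K assume mK: "maximal_clique V E K"
    hence cK: "clique V E K" and mx: "\<And>K'. clique V E K' \<Longrightarrow> K \<subseteq> K' \<Longrightarrow> K' = K"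
      unfolding maximal_clique_def by blast+
    have KV: "K \<subseteq> V" using cK unfolding clique_def by blast
    have symE: "\<And>a b. E a b \<Longrightarrow> E b a" and irr: "\<And>a. \<not> E a a"
      and inV: "\<And>a b. E a b \<Longrightarrow> a \<in> V \<and> b \<in> V"
      using assms(1) unfolding graph_def by blast+
    show "simplicial_clique V E K"
    proof (cases "\<exists>u\<in>K. \<exists>v\<in>K. u \<noteq> v")
      case True
      then obtain u v where uv: "u \<in> K" "v \<in> K" "u \<noteq> v" by blast
      hence "E u v" using cK unfolding clique_def by blast
      then obtain w where sw: "simplicial_vertex V E w"
        and uN: "u \<in> closed_nbhd V E w" and vN: "v \<in> closed_nbhd V E w"
        using es unfolding edge_simplicial_def simplicial_clique_def by blast
      have cN: "clique V E (closed_nbhd V E w)" and wV: "w \<in> V"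
        using sw unfolding simplicial_vertex_def by blast+
      have "K = closed_nbhd V E w"
      proof (cases "w \<in> K")
        case wK: True
        have "K \<subseteq> closed_nbhd V E w"
        proof
          fix y assume y: "y \<in> K"
          show "y \<in> closed_nbhd V E w"
          proof (cases "y = w")
            case False
            have cK': "\<forall>a\<in>K. \<forall>b\<in>K. a \<noteq> b \<longrightarrow> E a b" using cK unfolding clique_def by blast
            hence "E w y" using wK y False by metis
            thus ?thesis using y KV unfolding closed_nbhd_def by blast
          qed (simp add: closed_nbhd_def)
        qed
        thus ?thesis using mx cN by blast
      next
        case False
        show ?thesis
        proof (rule ccontr)
          assume ne: "K \<noteq> closed_nbhd V E w"
          have "\<not> K \<subseteq> closed_nbhd V E w" using mx cN ne by blast
          then obtain x where x: "x \<in> K" "x \<notin> closed_nbhd V E w" by blast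
          have xV: "x \<in> V" using x KV by blast
          have nxw: "\<not> E w x" using x xV unfolding closed_nbhd_def by blast
          have xu: "x \<noteq> u" "x \<noteq> v" "x \<noteq> w" using x uN vN unfolding closed_nbhd_def by auto
          have wu: "w \<noteq> u" "w \<noteq> v" using False uv by auto
          have Euw: "E u w" "E v w" using uN vN wu symE unfolding closed_nbhd_def by blast+
          have Eux: "E u x" "E v x" using cK uv x xu unfolding clique_def by auto
          have "\<exists>a\<in>V. \<exists>b\<in>V. \<exists>c\<in>V. \<exists>d\<in>V.
            distinct [a, b, c, d] \<and> E a b \<and> E a c \<and> E a d \<and> E b c \<and> E b d \<and> \<not> E c d"
            apply (rule bexI[of _ u], rule bexI[of _ v], rule bexI[of _ w], rule bexI[of _ x])
            using uv xu wu \<open>E u v\<close> Euw Eux nxw xV wV KV by auto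
          thus False using assms(2) unfolding diamond_free_def by blast
        qed
      qed
      thus ?thesis using sw unfolding simplicial_clique_def by blast
    next
      case False
      have "K \<noteq> {}"
      proof
        assume "K = {}"
        obtain a where "a \<in> V" using assms(1) unfolding graph_def by blast
        hence "clique V E {a}" unfolding clique_def by blast
        thus False using mx \<open>K = {}\<close> by blast
      qed
      then obtain a where K: "K = {a}" using False by blast
      have aV: "a \<in> V" using K KV by blast
      have noE: "\<not> E a b" for b
      proof
        assume "E a b"
        hence "clique V E {a, b}" using inV symE unfolding clique_def by blast
        hence "{a,b} = K" using mx K by blast
        thus False using \<open>E a b\<close> irr K by auto
      qed
      have "closed_nbhd V E a = K" using noE K unfolding closed_nbhd_def by auto
      moreover have "simplicial_vertex V E a"
        using aV cK \<open>closed_nbhd V E a = K\<close> unfolding simplicial_vertex_def by simp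
      ultimately show ?thesis unfolding simplicial_clique_def by blast
    qed
  qed
qed

end
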